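(* Suppose $u_1$ is cyclically separable. For any Nash equilibrium $(\sigma_0^*,\sigma_1^*,\sigma_2^* )$ and any period-$t$ public history $h^t\in\mathrm{supp}(\mathbb{P}_t)$, the stage strategy $\sigma_1^*(h^t)$ is $u_1$-cyclically monotone.
   Context: Stage game. Three players $0,1,2$ have finite action sets $A_0,A_1,A_2$; $Y_0,Y_1$ are finite signal sets. Player 0 takes $a_0$, generating a signal $y_0\sim\rho_0(\cdot\mid a_0)$ observed only by player 1; players 1 and 2 then simultaneously take $a_1,a_2$, generating a public signal $y_1\sim\rho_1(\cdot\mid a_1,a_2)$. Assume: (i) $\rho_0(y_0\mid a_0)>0$ always; (ii) $\rho_1(y_1\mid a_1,a_2)>0$ implies $\rho_1(y_1\mid a_1,a_2')>0$; (iii) for every $a_2$ the vectors $(\rho_1(\cdot\mid a_1,a_2))_{a_1\in A_1}$ are linearly independent. Stage strategies: $\alpha_0\in\Delta(A_0)$, $\alpha_2\in\Delta(A_2)$, $s_1:Y_0\to\Delta(A_1)$. Payoffs $u_0:A_0\times A_1\to\mathbb{R}$, $u_i:Y_0\times A_1\times A_2\to\mathbb{R}$ extended by expectation; $u_1(\cdot,\alpha_2)$ is $(y_0,a_1)\mapsto\sum_{a_2}\alpha_2(a_2)u_1(y_0,a_1,a_2)$. Repeated game: periods $t=0,1,\dots$; player 1 long-lived with discount factor $\delta\in(0,1)$ and payoff $(1-\delta)\sum_t\delta^tu_1$; new myopic players 0 and 2 each period observe only the public history $h^t\in Y_1^t$. Player 1's type is drawn from a full-support prior on a countable set $\Omega$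 consisting of a rational type $\omega_R$ and commitment types $\omega_{s_1}$ that play $s_1$ every period. In a Nash equilibrium $(\sigma_0^*,\sigma_1^*,\sigma_2^* )$, $\sigma_1^*$ is the rational type's strategy (a map from public histories to stage strategies), and $\mathbb{P}_t$ is the induced distribution over period-$t$ public histories conditional on player 1 being rational. For $u:Y_0\times A_1\to\mathbb{R}$, $S\subset Y_0\times A_1$ is $u$-cyclically monotone if for every finite $\{(x_i,y_i)\}_{i=1}^N\subset S$ (with $y_{N+1}=y_1$), $\sum_iu(x_i,y_i)\ge\sum_iu(x_i,y_{i+1})$. $u_1$ is cyclically separable if any $S$ that is $u_1(\cdot,\alpha_2)$-cyclically monotone for some $\alpha_2$ is so for all $\alpha_2$. A stage strategy $s_1$ is $u_1$-cyclically monotone if $\{(y_0,a_1):a_1\in\mathrm{supp}(s_1(y_0))\}$ is $u_1(\cdot,\alpha_2)$-cyclically monotone for all $\alpha_2$. *)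

theory Defs
  imports "HOL-Probability.Probability"
begin

definition cyc_monotone :: "('x \<Rightarrow> 'y \<Rightarrow> real) \<Rightarrow> ('x \<times> 'y) set \<Rightarrow> bool" where
  "cyc_monotone u S \<longleftrightarrow>
     (\<forall>N::nat. \<forall>x y. N \<ge> 1 \<longrightarrow> (\<forall>i<N. (x i, y i) \<in> S) \<longrightarrow>
        (\<Sum>i<N. u (x i) (y i)) \<ge> (\<Sum>i<N. u (x i) (y (Suc i mod N))))"

definition u1_at :: "('y0 \<Rightarrow> 'a1 \<Rightarrow> 'a2 \<Rightarrow> real) \<Rightarrow> 'a2 pmf \<Rightarrow> 'y0 \<Rightarrow> 'a1 \<Rightarrow> real" where
  "u1_at u1 \<alpha>2 y0 a1 = measure_pmf.expectation \<alpha>2 (\<lambda>a2. u1 y0 a1 a2)"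

definition cyclically_separable :: "('y0 \<Rightarrow> 'a1 \<Rightarrow> 'a2 \<Rightarrow> real) \<Rightarrow> bool" where
  "cyclically_separable u1 \<longleftrightarrow>
     (\<forall>S. (\<exists>\<alpha>2. cyc_monotone (u1_at u1 \<alpha>2) S) \<longrightarrow> (\<forall>\<alpha>2. cyc_monotone (u1_at u1 \<alpha>2) S))"

definition strategy_cyc_monotone :: "('y0 \<Rightarrow> 'a1 \<Rightarrow> 'a2 \<Rightarrow> real) \<Rightarrow> ('y0 \<Rightarrow> 'a1 pmf) \<Rightarrow> bool" where
  "strategy_cyc_monotone u1 s1 \<longleftrightarrow>
     (\<forall>\<alpha>2. cyc_monotone (u1_at u1 \<alpha>2) {(y0, a1). a1 \<in> set_pmf (s1 y0)})"

definition stage_outcome ::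
  "'a0 pmf \<Rightarrow> ('a0 \<Rightarrow> 'y0 pmf) \<Rightarrow> ('y0 \<Rightarrow> 'a1 pmf) \<Rightarrow> 'a2 pmf \<Rightarrow> ('a0 \<times> 'y0 \<times> 'a1 \<times> 'a2) pmf" where
  "stage_outcome \<alpha>0 \<rho>0 s1 \<alpha>2 =
     bind_pmf \<alpha>0 (\<lambda>a0. bind_pmf (\<rho>0 a0) (\<lambda>y0. bind_pmf (s1 y0) (\<lambda>a1.
       map_pmf (\<lambda>a2. (a0, y0, a1, a2)) \<alpha>2)))"

definition stage_signal ::
  "'a0 pmf \<Rightarrow> ('a0 \<Rightarrow> 'y0 pmf) \<Rightarrow> ('y0 \<Rightarrow> 'a1 pmf) \<Rightarrow> 'a2 pmf \<Rightarrow> ('a1 \<Rightarrow> 'a2 \<Rightarrow> 'y1 pmf) \<Rightarrow> 'y1 pmf" where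
  "stage_signal \<alpha>0 \<rho>0 s1 \<alpha>2 \<rho>1 =
     bind_pmf (stage_outcome \<alpha>0 \<rho>0 s1 \<alpha>2) (\<lambda>(a0, y0, a1, a2). \<rho>1 a1 a2)"

text \<open>Public histories are lists of public signals in chronological order.
  Strategies of players 0 and 2 and (public) strategies of player 1 are maps from
  public histories to stage strategies.\<close>
primrec public_hist ::
  "('y1 list \<Rightarrow> 'a0 pmf) \<Rightarrow> ('a0 \<Rightarrow> 'y0 pmf) \<Rightarrow> ('y1 list \<Rightarrow> 'y0 \<Rightarrow> 'a1 pmf) \<Rightarrow>
   ('y1 list \<Rightarrow> 'a2 pmf) \<Rightarrow> ('a1 \<Rightarrow> 'a2 \<Rightarrow> 'y1 pmf) \<Rightarrow> nat \<Rightarrow> 'y1 list pmf" where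
  "public_hist \<sigma>0 \<rho>0 f \<sigma>2 \<rho>1 0 = return_pmf []"
| "public_hist \<sigma>0 \<rho>0 f \<sigma>2 \<rho>1 (Suc t) =
     bind_pmf (public_hist \<sigma>0 \<rho>0 f \<sigma>2 \<rho>1 t)
       (\<lambda>h. map_pmf (\<lambda>y1. h @ [y1]) (stage_signal (\<sigma>0 h) \<rho>0 (f h) (\<sigma>2 h) \<rho>1))"

definition lr_payoff ::
  "real \<Rightarrow> ('y0 \<Rightarrow> 'a1 \<Rightarrow> 'a2 \<Rightarrow> real) \<Rightarrow> ('y1 list \<Rightarrow> 'a0 pmf) \<Rightarrow> ('a0 \<Rightarrow> 'y0 pmf) \<Rightarrow>
   ('y1 list \<Rightarrow> 'y0 \<Rightarrow> 'a1 pmf) \<Rightarrow> ('y1 list \<Rightarrow> 'a2 pmf) \<Rightarrow> ('a1 \<Rightarrow> 'a2 \<Rightarrow> 'y1 pmf) \<Rightarrow> real" where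
  "lr_payoff \<delta> u1 \<sigma>0 \<rho>0 f \<sigma>2 \<rho>1 =
     (1 - \<delta>) * (\<Sum>t. \<delta> ^ t *
        measure_pmf.expectation (public_hist \<sigma>0 \<rho>0 f \<sigma>2 \<rho>1 t)
          (\<lambda>h. measure_pmf.expectation (stage_outcome (\<sigma>0 h) \<rho>0 (f h) (\<sigma>2 h))
                  (\<lambda>(a0, y0, a1, a2). u1 y0 a1 a2)))"

text \<open>Types of player 1: None is the rational type omega_R, Some s1 is the commitment
  type omega_{s1} playing s1 in every period.\<close>
definition type_play ::
  "('y1 list \<Rightarrow> 'y0 \<Rightarrow> 'a1 pmf) \<Rightarrow> ('y0 \<Rightarrow> 'a1 pmf) option \<Rightarrow> 'y1 list \<Rightarrow> 'y0 \<Rightarrow> 'a1 pmf" where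
  "type_play \<sigma>1 \<omega> = (case \<omega> of None \<Rightarrow> \<sigma>1 | Some s1 \<Rightarrow> (\<lambda>h. s1))"

text \<open>The conditions for the short-run players are stated with the unnormalised
  posterior weights prior(omega) * P(h | omega), so they are vacuous at histories of
  probability zero.\<close>
definition nash_eq ::
  "('a0 \<Rightarrow> 'y0 pmf) \<Rightarrow> ('a1 \<Rightarrow> 'a2 \<Rightarrow> 'y1 pmf) \<Rightarrow> ('a0 \<Rightarrow> 'a1 \<Rightarrow> real) \<Rightarrow>
   ('y0 \<Rightarrow> 'a1 \<Rightarrow> 'a2 \<Rightarrow> real) \<Rightarrow> ('y0 \<Rightarrow> 'a1 \<Rightarrow> 'a2 \<Rightarrow> real) \<Rightarrow> real \<Rightarrow>
   ('y0 \<Rightarrow> 'a1 pmf) option pmf \<Rightarrow>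
   ('y1 list \<Rightarrow> 'a0 pmf) \<Rightarrow> ('y1 list \<Rightarrow> 'y0 \<Rightarrow> 'a1 pmf) \<Rightarrow> ('y1 list \<Rightarrow> 'a2 pmf) \<Rightarrow> bool" where
  "nash_eq \<rho>0 \<rho>1 u0 u1 u2 \<delta> prior \<sigma>0 \<sigma>1 \<sigma>2 \<longleftrightarrow>
     (\<forall>f. lr_payoff \<delta> u1 \<sigma>0 \<rho>0 f \<sigma>2 \<rho>1 \<le> lr_payoff \<delta> u1 \<sigma>0 \<rho>0 \<sigma>1 \<sigma>2 \<rho>1) \<and>
     (\<forall>h \<alpha>0.
        measure_pmf.expectation prior (\<lambda>\<omega>.
          pmf (public_hist \<sigma>0 \<rho>0 (type_play \<sigma>1 \<omega>) \<sigma>2 \<rho>1 (length h)) h *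
          measure_pmf.expectation (stage_outcome \<alpha>0 \<rho>0 (type_play \<sigma>1 \<omega> h) (\<sigma>2 h))
            (\<lambda>(a0, y0, a1, a2). u0 a0 a1))
        \<le> measure_pmf.expectation prior (\<lambda>\<omega>.
          pmf (public_hist \<sigma>0 \<rho>0 (type_play \<sigma>1 \<omega>) \<sigma>2 \<rho>1 (length h)) h *
          measure_pmf.expectation (stage_outcome (\<sigma>0 h) \<rho>0 (type_play \<sigma>1 \<omega> h) (\<sigma>2 h))
            (\<lambda>(a0, y0, a1, a2). u0 a0 a1))) \<and>
     (\<forall>h \<alpha>2.
        measure_pmf.expectation prior (\<lambda>\<omega>.
          pmf (public_hist \<sigma>0 \<rho>0 (type_play \<sigma>1 \<omega>) \<sigma>2 \<rho>1 (length h)) h *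
          measure_pmf.expectation (stage_outcome (\<sigma>0 h) \<rho>0 (type_play \<sigma>1 \<omega> h) \<alpha>2)
            (\<lambda>(a0, y0, a1, a2). u2 y0 a1 a2))
        \<le> measure_pmf.expectation prior (\<lambda>\<omega>.
          pmf (public_hist \<sigma>0 \<rho>0 (type_play \<sigma>1 \<omega>) \<sigma>2 \<rho>1 (length h)) h *
          measure_pmf.expectation (stage_outcome (\<sigma>0 h) \<rho>0 (type_play \<sigma>1 \<omega> h) (\<sigma>2 h))
            (\<lambda>(a0, y0, a1, a2). u2 y0 a1 a2)))"

end

theory Submission
  imports Defs
begin

definition Wt :: "'a0::finite pmf \<Rightarrow> ('a0 \<Rightarrow> 'y0 pmf) \<Rightarrow> 'y0 \<Rightarrow> real" where
  "Wt \<alpha>0 \<rho>0 y0 = (\<Sum>a0\<in>UNIV. pmf \<alpha>0 a0 * pmf (\<rho>0 a0) y0)"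

lemma stage_expect:
  fixes \<alpha>0 :: "'a0::finite pmf" and \<rho>0 :: "'a0 \<Rightarrow> 'y0::finite pmf" and s :: "'y0 \<Rightarrow> 'a1::finite pmf"
    and g :: "'y0 \<Rightarrow> 'a1 \<Rightarrow> 'a2::finite \<Rightarrow> real" and \<alpha>2 :: "'a2 pmf"
  shows "measure_pmf.expectation (stage_outcome \<alpha>0 \<rho>0 s \<alpha>2) (\<lambda>(a0,y0,a1,a2). g y0 a1 a2)
     = (\<Sum>y0\<in>UNIV. \<Sum>a1\<in>UNIV. Wt \<alpha>0 \<rho>0 y0 * pmf (s y0) a1 * measure_pmf.expectation \<alpha>2 (g y0 a1))"
proof -
  have "measure_pmf.expectation (stage_outcome \<alpha>0 \<rho>0 s \<alpha>2) (\<lambda>(a0,y0,a1,a2). g y0 a1 a2)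
     = (\<Sum>a0\<in>UNIV. pmf \<alpha>0 a0 * (\<Sum>y0\<in>UNIV. pmf (\<rho>0 a0) y0 * (\<Sum>a1\<in>UNIV. pmf (s y0) a1 * measure_pmf.expectation \<alpha>2 (g y0 a1))))"
    unfolding stage_outcome_def
    apply (subst pmf_expectation_bind[where A=UNIV], simp, simp, simp)
    apply (rule sum.cong[OF refl])
    apply (subst pmf_expectation_bind[where A=UNIV], simp, simp, simp)
    apply (simp only: real_scaleR_def)
    apply (rule arg_cong[where f="\<lambda>x. _ * x"])
    apply (rule sum.cong[OF refl])
    apply (subst pmf_expectation_bind[where A=UNIV], simp, simp, simp)
    apply (simp add: split_beta)
    done
  also have "\<dots> = (\<Sum>a0\<in>UNIV. \<Sum>y0\<in>UNIV. \<Sum>a1\<in>UNIV. pmf \<alpha>0 a0 * pmf (\<rho>0 a0) y0 * pmf (s y0) a1 * measure_pmf.expectation \<alpha>2 (g y0 a1))"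
    by (simp add: sum_distrib_left mult.assoc)
  also have "\<dots> = (\<Sum>y0\<in>UNIV. \<Sum>a0\<in>UNIV. \<Sum>a1\<in>UNIV. pmf \<alpha>0 a0 * pmf (\<rho>0 a0) y0 * pmf (s y0) a1 * measure_pmf.expectation \<alpha>2 (g y0 a1))"
    by (rule sum.swap)
  also have "\<dots> = (\<Sum>y0\<in>UNIV. \<Sum>a1\<in>UNIV. \<Sum>a0\<in>UNIV. pmf \<alpha>0 a0 * pmf (\<rho>0 a0) y0 * pmf (s y0) a1 * measure_pmf.expectation \<alpha>2 (g y0 a1))"
    by (rule sum.cong[OF refl], rule sum.swap)
  also have "\<dots> = (\<Sum>y0\<in>UNIV. \<Sum>a1\<in>UNIV. Wt \<alpha>0 \<rho>0 y0 * pmf (s y0) a1 * measure_pmf.expectation \<alpha>2 (g y0 a1))"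
    by (simp add: Wt_def sum_distrib_right)
  finally show ?thesis .
qed

lemma stage_signal_pmf:
  fixes \<alpha>0 :: "'a0::finite pmf" and \<rho>0 :: "'a0 \<Rightarrow> 'y0::finite pmf" and s :: "'y0 \<Rightarrow> 'a1::finite pmf"
    and \<alpha>2 :: "'a2::finite pmf"
  shows "pmf (stage_signal \<alpha>0 \<rho>0 s \<alpha>2 \<rho>1) y1
     = (\<Sum>y0\<in>UNIV. \<Sum>a1\<in>UNIV. Wt \<alpha>0 \<rho>0 y0 * pmf (s y0) a1 * measure_pmf.expectation \<alpha>2 (\<lambda>a2. pmf (\<rho>1 a1 a2) y1))"
proof -
  have "pmf (stage_signal \<alpha>0 \<rho>0 s \<alpha>2 \<rho>1) y1 =
     measure_pmf.expectation (stage_outcome \<alpha>0 \<rho>0 s \<alpha>2) (\<lambda>(a0,y0,a1,a2). (\<lambda>y0 a1 a2. pmf (\<rho>1 a1 a2) y1) y0 a1 a2)"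
    unfolding stage_signal_def pmf_bind
    by (rule arg_cong[where f="measure_pmf.expectation _"]) (auto split: prod.split)
  then show ?thesis using stage_expect[of \<alpha>0 \<rho>0 s \<alpha>2 "\<lambda>y0 a1 a2. pmf (\<rho>1 a1 a2) y1"] by simp
qed

lemma sum_rot:
  fixes g :: "nat \<Rightarrow> 'b::comm_monoid_add" assumes "N \<ge> 1"
  shows "(\<Sum>i<N. g (Suc i mod N)) = (\<Sum>i<N. g i)"
proof -
  obtain M where N: "N = Suc M" using assms by (cases N) auto
  have "(\<Sum>i<N. g (Suc i mod N)) = (\<Sum>i<M. g (Suc i mod N)) + g (Suc M mod N)" by (simp add: N)
  also have "(\<Sum>i<M. g (Suc i mod N)) = (\<Sum>i<M. g (Suc i))" by (rule sum.cong) (auto simp: N)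
  also have "g (Suc M mod N) = g 0" by (simp add: N)
  also have "(\<Sum>i<M. g (Suc i)) + g 0 = (\<Sum>i<Suc M. g i)" by (simp only: sum.lessThan_Suc_shift add.commute)
  finally show ?thesis by (simp add: N)
qed

lemma abs_exp_le:
  fixes F :: "'a \<Rightarrow> real"
  assumes "\<And>x. \<bar>F x\<bar> \<le> B"
  shows "\<bar>measure_pmf.expectation p F\<bar> \<le> B"
proof -
  have i: "integrable (measure_pmf p) F"
    by (rule measure_pmf.integrable_const_bound[where B=B]) (use assms in auto)
  have b1: "\<And>x. F x \<le> B" and b2: "\<And>x. -B \<le> F x" using assms by (metis abs_le_iff minus_le_iff)+
  have "measure_pmf.expectation p F \<le> measure_pmf.expectation p (\<lambda>_. B)"
    by (rule integral_mono) (use b1 i in auto)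
  moreover have "measure_pmf.expectation p (\<lambda>_. -B) \<le> measure_pmf.expectation p F"
    by (rule integral_mono) (use b2 i in auto)
  ultimately show ?thesis by simp
qed

lemma sdelta[simp]:
  "(\<Sum>a\<in>(UNIV::'a::finite set). if P \<and> b = a then (g a::real) else 0) = (if P then g b else 0)"
  by (cases P) auto

lemma sdelta2[simp]:
  "(\<Sum>a\<in>(UNIV::'a::finite set). (if P \<and> b = a then 1 else 0) * (g a::real)) = (if P then g b else 0)"
proof -
  have "(\<Sum>a\<in>(UNIV::'a set). (if P \<and> b = a then 1 else 0) * (g a::real)) =
        (\<Sum>a\<in>(UNIV::'a set). if P \<and> b = a then g a else 0)"
    by (rule sum.cong) auto
  then show ?thesis by simp
qed

lemma perturb:
  fixes w :: "'y0::finite \<Rightarrow> real" and s :: "'y0 \<Rightarrow> 'a1::finite pmf" and U :: "'y0 \<Rightarrow> 'a1 \<Rightarrow> real"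
    and x :: "nat \<Rightarrow> 'y0" and y :: "nat \<Rightarrow> 'a1"
  assumes wpos: "\<And>y0. w y0 > 0" and N: "N \<ge> 1" and supp: "\<forall>i<N. y i \<in> set_pmf (s (x i))"
    and gain: "(\<Sum>i<N. U (x i) (y i)) < (\<Sum>i<N. U (x i) (y (Suc i mod N)))"
  shows "\<exists>s'. (\<forall>a1. (\<Sum>y0\<in>UNIV. w y0 * pmf (s' y0) a1) = (\<Sum>y0\<in>UNIV. w y0 * pmf (s y0) a1)) \<and>
     (\<Sum>y0\<in>UNIV. \<Sum>a1\<in>UNIV. w y0 * pmf (s y0) a1 * U y0 a1)
       < (\<Sum>y0\<in>UNIV. \<Sum>a1\<in>UNIV. w y0 * pmf (s' y0) a1 * U y0 a1)"
proof -
  define A where "A y0 a1 i = (if x i = y0 \<and> y (Suc i mod N) = a1 then 1 else 0 :: real)" for y0 a1 i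
  define Bm where "Bm y0 a1 i = (if x i = y0 \<and> y i = a1 then 1 else 0 :: real)" for y0 a1 i
  define c where "c y0 a1 = (\<Sum>i<N. A y0 a1 i - Bm y0 a1 i)" for y0 a1
  define V where "V = (\<lambda>i. w (x i) * pmf (s (x i)) (y i)) ` {..<N}"
  define m where "m = Min V"
  define \<epsilon> where "\<epsilon> = m / real N"
  have fin: "finite V" unfolding V_def by simp
  have ne: "V \<noteq> {}" using N unfolding V_def by (auto simp: lessThan_empty_iff)
  have mpos: "m > 0"
  proof -
    have "m \<in> V" unfolding m_def using Min_in[OF fin ne] .
    then obtain i where "i < N" "m = w (x i) * pmf (s (x i)) (y i)" unfolding V_def by auto
    moreover have "pmf (s (x i)) (y i) > 0" using supp \<open>i < N\<close>
      by (simp add: pmf_positive)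
    ultimately show ?thesis using wpos by simp
  qed
  have mle: "\<And>i. i < N \<Longrightarrow> m \<le> w (x i) * pmf (s (x i)) (y i)"
    unfolding m_def V_def by (rule Min_le) auto
  have epos: "\<epsilon> > 0" using mpos N by (simp add: \<epsilon>_def)
  define f where "f y0 a1 = pmf (s y0) a1 + \<epsilon> / w y0 * c y0 a1" for y0 a1
  have fnn: "f y0 a1 \<ge> 0" for y0 a1
  proof (cases "\<exists>i<N. x i = y0 \<and> y i = a1")
    case False
    have "c y0 a1 \<ge> 0" unfolding c_def using False
      by (intro sum_nonneg) (auto simp: A_def Bm_def)
    then show ?thesis unfolding f_def using epos wpos[of y0]
      by (simp add: pmf_nonneg)
  next
    case True
    then obtain i where i: "i < N" "x i = y0" "y i = a1" by auto
    have "(\<Sum>i<N. - 1) \<le> c y0 a1" unfolding c_def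
      by (intro sum_mono) (auto simp: A_def Bm_def)
    then have cge: "- real N \<le> c y0 a1" by simp
    have "\<epsilon> / w y0 * (- real N) \<le> \<epsilon> / w y0 * c y0 a1"
      using cge epos wpos[of y0] by (intro mult_left_mono) auto
    moreover have "\<epsilon> / w y0 * (- real N) = - (m / w y0)"
      using N by (simp add: \<epsilon>_def field_simps)
    moreover have "m / w y0 \<le> pmf (s y0) a1"
      using mle[OF i(1)] i wpos[of y0] by (simp add: field_simps)
    ultimately show ?thesis unfolding f_def by linarith
  qed
  have csum: "(\<Sum>a1\<in>UNIV. c y0 a1) = 0" for y0
  proof -
    have "(\<Sum>a1\<in>UNIV. c y0 a1) = (\<Sum>i<N. \<Sum>a1\<in>UNIV. A y0 a1 i - Bm y0 a1 i)"
      unfolding c_def by (rule sum.swap)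
    also have "\<dots> = (\<Sum>i<N. 0)"
      by (rule sum.cong[OF refl]) (simp add: sum_subtractf A_def Bm_def if_distrib[symmetric])
    finally show ?thesis by simp
  qed
  have fsum: "(\<Sum>a1\<in>UNIV. f y0 a1) = 1" for y0
  proof -
    have "(\<Sum>a1\<in>UNIV. \<epsilon> / w y0 * c y0 a1) = 0"
      by (subst sum_distrib_left[symmetric]) (simp only: csum mult_zero_right)
    then show ?thesis unfolding f_def by (simp only: sum.distrib) (simp add: sum_pmf_eq_1)
  qed
  define s' where "s' y0 = embed_pmf (f y0)" for y0
  have ps': "pmf (s' y0) a1 = f y0 a1" for y0 a1
  proof -
    have "(\<integral>\<^sup>+a. ennreal (f y0 a) \<partial>count_space UNIV) = 1"
      by (simp add: nn_integral_count_space_finite sum_ennreal fnn fsum)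
    then show ?thesis unfolding s'_def by (intro pmf_embed_pmf) (auto simp: fnn)
  qed
  have cmarg: "(\<Sum>y0\<in>UNIV. c y0 a1) = 0" for a1
  proof -
    have "(\<Sum>y0\<in>UNIV. c y0 a1) = (\<Sum>i<N. \<Sum>y0\<in>UNIV. A y0 a1 i - Bm y0 a1 i)"
      unfolding c_def by (rule sum.swap)
    also have "\<dots> = (\<Sum>i<N. (if y (Suc i mod N) = a1 then 1 else 0) - (if y i = a1 then 1 else 0))"
      by (rule sum.cong[OF refl]) (simp add: sum_subtractf A_def Bm_def if_distrib[symmetric])
    also have "\<dots> = 0"
      using sum_rot[OF N, of "\<lambda>i. if y i = a1 then 1 else (0::real)"] by (simp add: sum_subtractf)
    finally show ?thesis .
  qed
  have wf: "w y0 * f y0 a1 = w y0 * pmf (s y0) a1 + \<epsilon> * c y0 a1" for y0 a1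
    using wpos[of y0] unfolding f_def by (simp add: field_simps)
  have marg: "(\<Sum>y0\<in>UNIV. w y0 * pmf (s' y0) a1) = (\<Sum>y0\<in>UNIV. w y0 * pmf (s y0) a1)" for a1
    by (simp add: ps' wf sum.distrib sum_distrib_left[symmetric] cmarg)
  have cU: "(\<Sum>y0\<in>UNIV. \<Sum>a1\<in>UNIV. c y0 a1 * U y0 a1) =
      (\<Sum>i<N. U (x i) (y (Suc i mod N))) - (\<Sum>i<N. U (x i) (y i))"
  proof -
    have "(\<Sum>y0\<in>UNIV. \<Sum>a1\<in>UNIV. c y0 a1 * U y0 a1) =
        (\<Sum>y0\<in>UNIV. \<Sum>a1\<in>UNIV. \<Sum>i<N. A y0 a1 i * U y0 a1 - Bm y0 a1 i * U y0 a1)"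
      unfolding c_def by (simp add: sum_distrib_right left_diff_distrib)
    also have "\<dots> = (\<Sum>y0\<in>UNIV. \<Sum>i<N. \<Sum>a1\<in>UNIV. A y0 a1 i * U y0 a1 - Bm y0 a1 i * U y0 a1)"
      by (rule sum.cong[OF refl], rule sum.swap)
    also have "\<dots> = (\<Sum>i<N. \<Sum>y0\<in>UNIV. \<Sum>a1\<in>UNIV. A y0 a1 i * U y0 a1 - Bm y0 a1 i * U y0 a1)"
      by (rule sum.swap)
    also have "\<dots> = (\<Sum>i<N. U (x i) (y (Suc i mod N)) - U (x i) (y i))"
      by (rule sum.cong[OF refl]) (simp add: sum_subtractf A_def Bm_def if_distrib[symmetric] cong: if_cong)
    finally show ?thesis by (simp add: sum_subtractf)
  qed
  have "(\<Sum>y0\<in>UNIV. \<Sum>a1\<in>UNIV. w y0 * pmf (s' y0) a1 * U y0 a1) =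
     (\<Sum>y0\<in>UNIV. \<Sum>a1\<in>UNIV. w y0 * pmf (s y0) a1 * U y0 a1) + \<epsilon> * (\<Sum>y0\<in>UNIV. \<Sum>a1\<in>UNIV. c y0 a1 * U y0 a1)"
    by (simp add: ps' wf distrib_right sum.distrib sum_distrib_left mult.assoc)
  moreover have "\<epsilon> * (\<Sum>y0\<in>UNIV. \<Sum>a1\<in>UNIV. c y0 a1 * U y0 a1) > 0"
    using epos gain cU by simp
  ultimately show ?thesis using marg by (intro exI[of _ s']) auto
qed

theorem lemma5:
  fixes \<rho>0 :: "'a0::finite \<Rightarrow> 'y0::finite pmf"
    and \<rho>1 :: "'a1::finite \<Rightarrow> 'a2::finite \<Rightarrow> 'y1::finite pmf"
    and u0 :: "'a0 \<Rightarrow> 'a1 \<Rightarrow> real"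
    and u1 u2 :: "'y0 \<Rightarrow> 'a1 \<Rightarrow> 'a2 \<Rightarrow> real"
    and \<delta> :: real
    and prior :: "('y0 \<Rightarrow> 'a1 pmf) option pmf"
    and \<sigma>0 :: "'y1 list \<Rightarrow> 'a0 pmf"
    and \<sigma>1 :: "'y1 list \<Rightarrow> 'y0 \<Rightarrow> 'a1 pmf"
    and \<sigma>2 :: "'y1 list \<Rightarrow> 'a2 pmf"
    and t :: nat and h :: "'y1 list"
  assumes delta: "0 < \<delta>" "\<delta> < 1"
    and rho0_pos: "\<forall>a0 y0. pmf (\<rho>0 a0) y0 > 0"
    and rho1_supp: "\<forall>y1 a1 a2 a2'. pmf (\<rho>1 a1 a2) y1 > 0 \<longrightarrow> pmf (\<rho>1 a1 a2') y1 > 0"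
    and rho1_indep: "\<forall>a2. \<forall>c :: 'a1 \<Rightarrow> real.
                       (\<forall>y1. (\<Sum>a1\<in>UNIV. c a1 * pmf (\<rho>1 a1 a2) y1) = 0) \<longrightarrow> (\<forall>a1. c a1 = 0)"
    and rational_type: "None \<in> set_pmf prior"
    and sep: "cyclically_separable u1"
    and NE: "nash_eq \<rho>0 \<rho>1 u0 u1 u2 \<delta> prior \<sigma>0 \<sigma>1 \<sigma>2"
    and hist: "h \<in> set_pmf (public_hist \<sigma>0 \<rho>0 \<sigma>1 \<sigma>2 \<rho>1 t)"
  shows "strategy_cyc_monotone u1 (\<sigma>1 h)"
proof (rule ccontr)
  assume nm: "\<not> strategy_cyc_monotone u1 (\<sigma>1 h)"
  let ?S = "{(y0, a1). a1 \<in> set_pmf (\<sigma>1 h y0)}"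
  let ?U = "u1_at u1 (\<sigma>2 h)"
  have "\<not> cyc_monotone ?U ?S"
    using nm sep unfolding strategy_cyc_monotone_def cyclically_separable_def by blast
  then obtain N x y where N: "N \<ge> 1" and supp0: "\<forall>i<N. (x i, y i) \<in> ?S"
     and gain: "(\<Sum>i<N. ?U (x i) (y i)) < (\<Sum>i<N. ?U (x i) (y (Suc i mod N)))"
    unfolding cyc_monotone_def by (auto simp: not_le)
  have supp: "\<forall>i<N. y i \<in> set_pmf (\<sigma>1 h (x i))" using supp0 by auto
  let ?w = "Wt (\<sigma>0 h) \<rho>0"
  have wpos: "?w y0 > 0" for y0
  proof -
    obtain a0 where a0: "a0 \<in> set_pmf (\<sigma>0 h)" using set_pmf_not_empty by fast
    show ?thesis unfolding Wt_def
      by (rule sum_pos2[where i=a0]) (use a0 rho0_pos in \<open>auto simp: pmf_positive\<close>)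
  qed
  obtain s' where marg: "\<forall>a1. (\<Sum>y0\<in>UNIV. ?w y0 * pmf (s' y0) a1) = (\<Sum>y0\<in>UNIV. ?w y0 * pmf (\<sigma>1 h y0) a1)"
    and better: "(\<Sum>y0\<in>UNIV. \<Sum>a1\<in>UNIV. ?w y0 * pmf (\<sigma>1 h y0) a1 * ?U y0 a1)
       < (\<Sum>y0\<in>UNIV. \<Sum>a1\<in>UNIV. ?w y0 * pmf (s' y0) a1 * ?U y0 a1)"
    using perturb[of ?w, OF wpos N supp gain] by blast
  define f where "f = \<sigma>1(h := s')"
  have sig: "stage_signal (\<sigma>0 h') \<rho>0 (f h') (\<sigma>2 h') \<rho>1 = stage_signal (\<sigma>0 h') \<rho>0 (\<sigma>1 h') (\<sigma>2 h') \<rho>1" for h'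
  proof (cases "h' = h")
    case True
    show ?thesis
    proof (rule pmf_eqI)
      fix y1
      define G where "G a1 = measure_pmf.expectation (\<sigma>2 h) (\<lambda>a2. pmf (\<rho>1 a1 a2) y1)" for a1
      have eq: "(\<Sum>y0\<in>UNIV. \<Sum>a1\<in>UNIV. ?w y0 * pmf (t y0) a1 * G a1) =
                (\<Sum>a1\<in>UNIV. (\<Sum>y0\<in>UNIV. ?w y0 * pmf (t y0) a1) * G a1)" for t
        by (subst sum.swap) (simp add: sum_distrib_right)
      show "pmf (stage_signal (\<sigma>0 h') \<rho>0 (f h') (\<sigma>2 h') \<rho>1) y1 = pmf (stage_signal (\<sigma>0 h') \<rho>0 (\<sigma>1 h') (\<sigma>2 h') \<rho>1) y1"
        unfolding stage_signal_pmf True G_def[symmetric] eq using marg by (simp add: f_def)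
    qed
  qed (simp add: f_def)
  have ph: "public_hist \<sigma>0 \<rho>0 f \<sigma>2 \<rho>1 t' = public_hist \<sigma>0 \<rho>0 \<sigma>1 \<sigma>2 \<rho>1 t'" for t'
    by (induction t') (simp_all add: sig)
  define \<Phi> where "\<Phi> = (\<lambda>g h'. measure_pmf.expectation (stage_outcome (\<sigma>0 h') \<rho>0 (g h') (\<sigma>2 h'))
                  (\<lambda>(a0, y0, a1, a2). u1 y0 a1 a2))"
  have lr: "lr_payoff \<delta> u1 \<sigma>0 \<rho>0 g \<sigma>2 \<rho>1 = (1 - \<delta>) * (\<Sum>t. \<delta> ^ t * measure_pmf.expectation (public_hist \<sigma>0 \<rho>0 g \<sigma>2 \<rho>1 t) (\<Phi> g))" for g
    unfolding lr_payoff_def \<Phi>_def by simp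
  define D where "D = \<Phi> f h - \<Phi> \<sigma>1 h"
  have Dpos: "D > 0"
    using better unfolding D_def \<Phi>_def stage_expect u1_at_def by (simp add: f_def)
  have \<Phi>f: "\<Phi> f h' = \<Phi> \<sigma>1 h' + (if h' = h then D else 0)" for h'
    by (cases "h' = h") (simp_all add: D_def, simp add: f_def \<Phi>_def)
  define B where "B = (\<Sum>z\<in>UNIV. \<bar>(\<lambda>(y0, a1, a2). u1 y0 a1 a2) z\<bar>)"
  have uB: "\<bar>u1 y0 a1 a2\<bar> \<le> B" for y0 a1 a2
    using member_le_sum[of "(y0, a1, a2)" UNIV "\<lambda>z. \<bar>(\<lambda>(y0, a1, a2). u1 y0 a1 a2) z\<bar>"]
    unfolding B_def by auto
  have \<Phi>B: "\<bar>\<Phi> g h'\<bar> \<le> B" for g h'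
    unfolding \<Phi>_def by (rule abs_exp_le) (use uB in auto)
  let ?P = "\<lambda>t'. public_hist \<sigma>0 \<rho>0 \<sigma>1 \<sigma>2 \<rho>1 t'"
  have int: "integrable (measure_pmf (?P t')) (\<Phi> \<sigma>1)" for t'
    by (rule measure_pmf.integrable_const_bound[where B=B]) (use \<Phi>B in auto)
  have expf: "measure_pmf.expectation (?P t') (\<Phi> f) = measure_pmf.expectation (?P t') (\<Phi> \<sigma>1) + pmf (?P t') h * D" for t'
  proof -
    have i2: "integrable (measure_pmf (?P t')) (\<lambda>h'. if h' = h then D else 0)"
      by (rule measure_pmf.integrable_const_bound[where B="\<bar>D\<bar>"]) auto
    have "measure_pmf.expectation (?P t') (\<lambda>h'. if h' = h then D else 0) = (\<Sum>a\<in>{h}. (if a = h then D else 0) * pmf (?P t') a)"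
      by (rule integral_measure_pmf_real) (auto split: if_splits)
    then show ?thesis unfolding \<Phi>f using int i2 by (simp add: Bochner_Integration.integral_add)
  qed
  define a where "a t' = \<delta> ^ t' * measure_pmf.expectation (?P t') (\<Phi> \<sigma>1)" for t'
  define c where "c t' = \<delta> ^ t' * (pmf (?P t') h * D)" for t'
  have geo: "summable (\<lambda>n. \<delta> ^ n * K)" for K
    by (rule summable_mult2, rule summable_geometric) (use delta in auto)
  have sa: "summable a"
  proof (rule summable_comparison_test[OF _ geo[of B]])
    show "\<exists>N. \<forall>n\<ge>N. norm (a n) \<le> \<delta> ^ n * B"
      using \<Phi>B delta by (auto simp: a_def abs_mult intro!: mult_left_mono abs_exp_le)
  qed
  have sc: "summable c"
  proof (rule summable_comparison_test[OF _ geo[of D]])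
    show "\<exists>N. \<forall>n\<ge>N. norm (c n) \<le> \<delta> ^ n * D"
      using Dpos delta by (auto simp: c_def abs_mult intro!: mult_left_mono mult_right_le_one_le pmf_le_1)
  qed
  have cpos: "suminf c > 0"
  proof (rule suminf_pos2[OF sc])
    show "0 \<le> c n" for n using Dpos delta by (simp add: c_def)
    have "pmf (?P t) h > 0" using hist by (simp add: pmf_positive)
    then show "0 < c t" using Dpos delta by (simp add: c_def)
  qed
  have "lr_payoff \<delta> u1 \<sigma>0 \<rho>0 f \<sigma>2 \<rho>1 = (1 - \<delta>) * (\<Sum>n. a n + c n)"
    unfolding lr ph by (simp add: expf a_def c_def distrib_left)
  also have "\<dots> = (1 - \<delta>) * (suminf a + suminf c)" using suminf_add[OF sa sc] by simp
  also have "\<dots> > (1 - \<delta>) * suminf a" using cpos delta by simp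
  also have "(1 - \<delta>) * suminf a = lr_payoff \<delta> u1 \<sigma>0 \<rho>0 \<sigma>1 \<sigma>2 \<rho>1"
    unfolding lr a_def by simp
  finally show False using NE unfolding nash_eq_def by (meson not_le)
qed

end
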